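(* Let $\Gamma$ be a cubic distance-regular graph with at least $10$ vertices and let $(u_{ij})$ be the generators of $C(G_{aut}^+(\Gamma))$. Then $u_{ij}u_{kl}=u_{kl}u_{ij}$ for all vertices $i,j,k,l$ with $d(i,k)=d(j,l)\le2$.
   Context: A connected regular graph $\Gamma=(V,E)$ of diameter $D$ is distance-regular with intersection array $\{b_0,\dots,b_{D-1};c_1,\dots,c_D\}$ if for any vertices $v,w$ with $d(v,w)=i$, exactly $b_i$ neighbors of $w$ are at distance $i+1$ from $v$ and exactly $c_i$ neighbors of $w$ are at distance $i-1$ from $v$ ($d$ the graph distance). Cubic means $3$-regular. $C(G_{aut}^+(\Gamma))$ is the universal unital $C^*$-algebra generated by $u_{ij}$, $i,j\in V=\{1,\dots,n\}$, with relations: (R1) $u_{ij}=u_{ij}^*=u_{ij}^2$; (R2) $\sum_{l} u_{il}=1=\sum_{l} u_{li}$ for all $i$; (R3) $u_{ij}u_{kl}=u_{kl}u_{ij}=0$ whenever exactly one of $(i,k)\in E$, $(j,l)\in E$ holds. *)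

theory Defs
  imports Complex_Main
begin

definition cstar_algebra ::
  "(complex \<Rightarrow> 'a::ring_1 \<Rightarrow> 'a) \<Rightarrow> ('a \<Rightarrow> real) \<Rightarrow> ('a \<Rightarrow> 'a) \<Rightarrow> bool" where
  "cstar_algebra sc nm st \<longleftrightarrow>
     (\<forall>x. sc 1 x = x) \<and>
     (\<forall>a b x. sc a (sc b x) = sc (a * b) x) \<and>
     (\<forall>a x y. sc a (x + y) = sc a x + sc a y) \<and>
     (\<forall>a b x. sc (a + b) x = sc a x + sc b x) \<and>
     (\<forall>a x y. sc a (x * y) = sc a x * y \<and> sc a (x * y) = x * sc a y) \<and>
     (\<forall>x. 0 \<le> nm x) \<and>
     (\<forall>x. nm x = 0 \<longleftrightarrow> x = 0) \<and>
     (\<forall>x y. nm (x + y) \<le> nm x + nm y) \<and>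
     (\<forall>a x. nm (sc a x) = cmod a * nm x) \<and>
     (\<forall>x y. nm (x * y) \<le> nm x * nm y) \<and>
     (\<forall>X :: nat \<Rightarrow> 'a.
        (\<forall>e>0. \<exists>N. \<forall>m\<ge>N. \<forall>n\<ge>N. nm (X m - X n) < e) \<longrightarrow>
        (\<exists>L. \<forall>e>0. \<exists>N. \<forall>n\<ge>N. nm (X n - L) < e)) \<and>
     (\<forall>x. st (st x) = x) \<and>
     (\<forall>x y. st (x + y) = st x + st y) \<and>
     (\<forall>a x. st (sc a x) = sc (cnj a) (st x)) \<and>
     (\<forall>x y. st (x * y) = st y * st x) \<and>
     (\<forall>x. nm (st x * x) = (nm x)\<^sup>2)"

definition simple_graph :: "'v set \<Rightarrow> ('v \<Rightarrow> 'v \<Rightarrow> bool) \<Rightarrow> bool" where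
  "simple_graph V E \<longleftrightarrow> finite V \<and> (\<forall>x y. E x y \<longrightarrow> x \<in> V \<and> y \<in> V) \<and>
     (\<forall>x y. E x y \<longrightarrow> E y x) \<and> (\<forall>x. \<not> E x x)"

definition connected_graph :: "'v set \<Rightarrow> ('v \<Rightarrow> 'v \<Rightarrow> bool) \<Rightarrow> bool" where
  "connected_graph V E \<longleftrightarrow> (\<forall>x\<in>V. \<forall>y\<in>V. \<exists>n. (E ^^ n) x y)"

definition gdist :: "('v \<Rightarrow> 'v \<Rightarrow> bool) \<Rightarrow> 'v \<Rightarrow> 'v \<Rightarrow> nat" where
  "gdist E x y = (LEAST n. (E ^^ n) x y)"

definition cubic :: "'v set \<Rightarrow> ('v \<Rightarrow> 'v \<Rightarrow> bool) \<Rightarrow> bool" where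
  "cubic V E \<longleftrightarrow> (\<forall>x\<in>V. card {y. E x y} = 3)"

definition distance_regular :: "'v set \<Rightarrow> ('v \<Rightarrow> 'v \<Rightarrow> bool) \<Rightarrow> bool" where
  "distance_regular V E \<longleftrightarrow> simple_graph V E \<and> connected_graph V E \<and>
     (\<exists>k. \<forall>x\<in>V. card {y. E x y} = k) \<and>
     (\<exists>b c :: nat \<Rightarrow> nat. \<forall>v\<in>V. \<forall>w\<in>V.
        card {x. E w x \<and> gdist E v x = gdist E v w + 1} = b (gdist E v w) \<and>
        card {x. E w x \<and> gdist E v x + 1 = gdist E v w} = c (gdist E v w))"

text \<open>u is a family of elements of a C*-algebra satisfying the defining
relations (R1)-(R3) of C(G_aut^+(Gamma)).\<close>
definition qaut_rel ::
  "'v set \<Rightarrow> ('v \<Rightarrow> 'v \<Rightarrow> bool) \<Rightarrow> ('a \<Rightarrow> 'a) \<Rightarrow> ('v \<Rightarrow> 'v \<Rightarrow> 'a::ring_1) \<Rightarrow> bool" where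
  "qaut_rel V E st u \<longleftrightarrow>
     (\<forall>i\<in>V. \<forall>j\<in>V. u i j = st (u i j) \<and> u i j = u i j * u i j) \<and>
     (\<forall>i\<in>V. (\<Sum>l\<in>V. u i l) = 1 \<and> (\<Sum>l\<in>V. u l i) = 1) \<and>
     (\<forall>i\<in>V. \<forall>j\<in>V. \<forall>k\<in>V. \<forall>l\<in>V. E i k \<noteq> E j l \<longrightarrow>
        u i j * u k l = 0 \<and> u k l * u i j = 0)"

end

theory Submission
  imports Defs
begin

locale cs =
  fixes sc :: "complex \<Rightarrow> 'a::ring_1 \<Rightarrow> 'a" and nm :: "'a \<Rightarrow> real" and st :: "'a \<Rightarrow> 'a"
  assumes C: "cstar_algebra sc nm st"
begin

lemmas ax = C[unfolded cstar_algebra_def]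

lemma sc1: "sc 1 x = x" using ax[THEN conjunct1] by blast
lemma sc_sc: "sc a (sc b x) = sc (a * b) x" using ax[THEN conjunct2, THEN conjunct1] by blast
lemma sc_addx: "sc a (x + y) = sc a x + sc a y" using ax[THEN conjunct2, THEN conjunct2, THEN conjunct1] by blast
lemma sc_adds: "sc (a + b) x = sc a x + sc b x" using ax[THEN conjunct2, THEN conjunct2, THEN conjunct2, THEN conjunct1] by blast
lemma sc_ml: "sc a (x * y) = sc a x * y" using ax[THEN conjunct2, THEN conjunct2, THEN conjunct2, THEN conjunct2, THEN conjunct1] by blast
lemma sc_mr: "sc a (x * y) = x * sc a y" using ax[THEN conjunct2, THEN conjunct2, THEN conjunct2, THEN conjunct2, THEN conjunct1] by blast
lemma nm_nonneg: "0 \<le> nm x" using ax[THEN conjunct2, THEN conjunct2, THEN conjunct2, THEN conjunct2, THEN conjunct2, THEN conjunct1] by blast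
lemma nm_eq0: "nm x = 0 \<longleftrightarrow> x = 0" using ax[THEN conjunct2, THEN conjunct2, THEN conjunct2, THEN conjunct2, THEN conjunct2, THEN conjunct2, THEN conjunct1] by blast
lemma nm_tri: "nm (x + y) \<le> nm x + nm y" using ax[THEN conjunct2, THEN conjunct2, THEN conjunct2, THEN conjunct2, THEN conjunct2, THEN conjunct2, THEN conjunct2, THEN conjunct1] by blast
lemma nm_sc: "nm (sc a x) = cmod a * nm x" using ax[THEN conjunct2, THEN conjunct2, THEN conjunct2, THEN conjunct2, THEN conjunct2, THEN conjunct2, THEN conjunct2, THEN conjunct2, THEN conjunct1] by blast
lemma nm_mult: "nm (x * y) \<le> nm x * nm y" using ax[THEN conjunct2, THEN conjunct2, THEN conjunct2, THEN conjunct2, THEN conjunct2, THEN conjunct2, THEN conjunct2, THEN conjunct2, THEN conjunct2, THEN conjunct1] by blast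
lemma st_st: "st (st x) = x" using ax[THEN conjunct2, THEN conjunct2, THEN conjunct2, THEN conjunct2, THEN conjunct2, THEN conjunct2, THEN conjunct2, THEN conjunct2, THEN conjunct2, THEN conjunct2, THEN conjunct2, THEN conjunct1] by blast
lemma st_add: "st (x + y) = st x + st y" using ax[THEN conjunct2, THEN conjunct2, THEN conjunct2, THEN conjunct2, THEN conjunct2, THEN conjunct2, THEN conjunct2, THEN conjunct2, THEN conjunct2, THEN conjunct2, THEN conjunct2, THEN conjunct2, THEN conjunct1] by blast
lemma st_sc: "st (sc a x) = sc (cnj a) (st x)" using ax[THEN conjunct2, THEN conjunct2, THEN conjunct2, THEN conjunct2, THEN conjunct2, THEN conjunct2, THEN conjunct2, THEN conjunct2, THEN conjunct2, THEN conjunct2, THEN conjunct2, THEN conjunct2, THEN conjunct2, THEN conjunct1] by blast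
lemma st_mult: "st (x * y) = st y * st x" using ax[THEN conjunct2, THEN conjunct2, THEN conjunct2, THEN conjunct2, THEN conjunct2, THEN conjunct2, THEN conjunct2, THEN conjunct2, THEN conjunct2, THEN conjunct2, THEN conjunct2, THEN conjunct2, THEN conjunct2, THEN conjunct2, THEN conjunct1] by blast
lemma cid: "nm (st x * x) = (nm x)\<^sup>2" using ax[THEN conjunct2, THEN conjunct2, THEN conjunct2, THEN conjunct2, THEN conjunct2, THEN conjunct2, THEN conjunct2, THEN conjunct2, THEN conjunct2, THEN conjunct2, THEN conjunct2, THEN conjunct2, THEN conjunct2, THEN conjunct2, THEN conjunct2] by blast

definition ph :: "complex \<Rightarrow> 'a" where "ph z = sc z 1"

lemma sc_eq: "sc z x = ph z * x"
  unfolding ph_def by (metis sc_ml mult_1_left)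
lemma sc_eq': "sc z x = x * ph z"
  unfolding ph_def by (metis sc_mr mult_1_right)
lemma ph_comm: "ph z * x = x * ph z"
  using sc_eq sc_eq' by metis
lemma ph_add: "ph (a + b) = ph a + ph b"
  unfolding ph_def by (rule sc_adds)
lemma ph_mult: "ph (a * b) = ph a * ph b"
proof -
  have "ph (a * b) = sc a (sc b 1)" unfolding ph_def by (simp add: sc_sc)
  also have "\<dots> = ph a * sc b 1" by (rule sc_eq)
  finally show ?thesis by (simp add: ph_def)
qed
lemma ph_multx: "ph a * (ph b * x) = ph (a * b) * x"
  by (simp add: ph_mult mult.assoc)
lemma ph_one: "ph 1 = 1"
  unfolding ph_def by (rule sc1)
lemma ph_zero: "ph 0 = 0"
proof -
  have "ph 0 = ph 0 + ph 0" using ph_add[of 0 0] by simp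
  then show ?thesis by simp
qed
lemma ph_minus: "ph (- a) = - ph a"
proof -
  have "ph (- a) + ph a = 0" using ph_add[of "-a" a] ph_zero by simp
  then show ?thesis by (simp add: eq_neg_iff_add_eq_0)
qed
lemma ph_diff: "ph (a - b) = ph a - ph b"
  using ph_add[of a "-b"] ph_minus[of b] by simp
lemma ph_of_nat: "ph (of_nat n) = of_nat n"
  by (induction n) (simp_all add: ph_zero ph_add ph_one)
lemma ph_two: "ph 2 = 2"
  using ph_of_nat[of 2] by simp
lemma nm_ph: "nm (ph z * x) = cmod z * nm x"
  using nm_sc[of z x] sc_eq[of z x] by simp
lemma st_zero: "st 0 = 0"
proof -
  have "st 0 = st 0 + st 0" using st_add[of 0 0] by simp
  then show ?thesis by simp
qed
lemma st_one: "st 1 = 1"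
proof -
  have "st (st 1 * 1) = st 1 * st (st 1)" by (rule st_mult)
  then show ?thesis by (simp add: st_st)
qed
lemma st_minus: "st (- x) = - st x"
proof -
  have "st (- x) + st x = 0" using st_add[of "-x" x] st_zero by simp
  then show ?thesis by (simp add: eq_neg_iff_add_eq_0)
qed
lemma st_diff: "st (x - y) = st x - st y"
  using st_add[of x "-y"] st_minus[of y] by simp
lemma st_ph: "st (ph z) = ph (cnj z)"
  unfolding ph_def by (simp add: st_sc st_one)
lemma st_pow: "st (x ^ n) = (st x) ^ n"
  by (induction n) (simp_all add: st_one st_mult power_commutes)
lemma nm_zero: "nm 0 = 0" using nm_eq0 by simp
lemma nm_minus: "nm (- x) = nm x"
proof -
  have "- x = ph (-1) * x" by (simp add: ph_minus ph_one)
  then show ?thesis using nm_ph[of "-1" x] by simp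
qed
lemma nm_diff: "nm (x - y) \<le> nm x + nm y"
  using nm_tri[of x "-y"] nm_minus[of y] by simp
lemma sq_le1: assumes "0 \<le> (x::real)" "x\<^sup>2 \<le> x" shows "x \<le> 1"
proof (rule ccontr)
  assume "\<not> x \<le> 1" then have "1 * x < x * x" using mult_strict_right_mono[of 1 x x] by simp
  then show False using assms(2) by (simp add: power2_eq_square)
qed
lemma sq_le1': "0 \<le> (x::real) \<Longrightarrow> x\<^sup>2 \<le> 1 \<Longrightarrow> x \<le> 1"
  by (metis abs_le_square_iff abs_of_nonneg abs_one power_one)
lemma proj_nm: assumes "st p = p" "p * p = p" shows "nm p \<le> 1"
proof -
  have "nm p = (nm p)\<^sup>2" using cid[of p] assms by simp
  then show ?thesis using sq_le1 nm_nonneg by simp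
qed
lemma nm_one: "nm 1 \<le> 1"
  by (rule proj_nm) (simp_all add: st_one)
lemma sa_sq: "st z = z \<Longrightarrow> nm (z * z) = (nm z)\<^sup>2"
  using cid[of z] by simp
lemma sa_pow2: assumes "st z = z" shows "nm (z ^ (2 ^ k)) = nm z ^ (2 ^ k)"
proof (induction k)
  case 0 then show ?case by simp
next
  case (Suc k)
  have e: "z ^ (2 ^ Suc k) = z ^ (2 ^ k) * z ^ (2 ^ k)"
    by (simp add: power_add[symmetric] mult_2)
  have s: "st (z ^ (2 ^ k)) = z ^ (2 ^ k)" using st_pow assms by simp
  have "nm (z ^ (2 ^ Suc k)) = (nm (z ^ (2 ^ k)))\<^sup>2" using e sa_sq[OF s] by simp
  also have "\<dots> = nm z ^ (2 ^ Suc k)" using Suc by (simp add: power_mult[symmetric] mult.commute)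
  finally show ?case .
qed
lemma nm_pow: "nm (x ^ n) \<le> nm x ^ n"
proof (induction n)
  case 0 then show ?case using nm_one by simp
next
  case (Suc n)
  have "nm (x ^ Suc n) \<le> nm x * nm (x ^ n)" using nm_mult[of x "x^n"] by simp
  also have "\<dots> \<le> nm x * nm x ^ n" using Suc nm_nonneg by (simp add: mult_left_mono)
  finally show ?case by simp
qed
lemma nm_sum: "nm (sum f S) \<le> (\<Sum>m\<in>S. nm (f m))"
proof (induction S rule: infinite_finite_induct)
  case (infinite A) then show ?case by (simp add: nm_zero)
next
  case empty then show ?case by (simp add: nm_zero)
next
  case (insert x F)
  then show ?case using nm_tri[of "f x" "sum f F"] by simp
qed


lemma prod_lin: "(1 + ph a * h) * (1 + ph b * h) = 1 + ph (a + b) * h + ph (a * b) * (h * h)"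
proof -
  have "(1 + ph a * h) * (1 + ph b * h) = 1 + ph a * h + ph b * h + ph a * h * (ph b * h)"
    by (simp add: algebra_simps)
  also have "ph a * h * (ph b * h) = ph a * (h * ph b) * h"
    by (simp add: mult.assoc)
  also have "\<dots> = ph a * (ph b * h) * h" by (simp add: ph_comm[of b h])
  also have "\<dots> = ph (a * b) * (h * h)" by (simp add: ph_mult mult.assoc)
  finally show ?thesis by (simp add: ph_add algebra_simps)
qed

lemma ph_half2: "ph (1/2) * (x + x) = x"
proof -
  have "ph (1/2) * (x + x) = ph (1/2) * ph 2 * x" by (simp add: ph_two mult.assoc mult_2)
  also have "\<dots> = x" by (simp add: ph_mult[symmetric] ph_one)
  finally show ?thesis .
qed

lemma sq_le1'': "0 \<le> (x::real) \<Longrightarrow> x\<^sup>2 \<le> 1 \<Longrightarrow> x \<le> 1"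
  using sq_le1' by blast

lemma Zlemma:
  assumes sa: "st h = h" and p: "nm (1 + h) \<le> 1" and m: "nm (1 - h) \<le> 1"
  shows "h = 0"
proof -
  define good where "good z \<longleftrightarrow> nm (1 + ph z * h) \<le> 1" for z
  have hh: "nm (1 + h * h) \<le> 1"
  proof -
    have e: "(1 + h) * (1 + h) + (1 - h) * (1 - h) = (1 + h * h) + (1 + h * h)" by (simp add: algebra_simps)
    have "1 + h * h = ph (1/2) * ((1 + h) * (1 + h) + (1 - h) * (1 - h))"
      using e ph_half2 by simp
    then have "nm (1 + h * h) = 1/2 * nm ((1 + h) * (1 + h) + (1 - h) * (1 - h))"
      using nm_ph[of "1/2"] by simp
    also have "\<dots> \<le> 1/2 * (nm ((1 + h) * (1 + h)) + nm ((1 - h) * (1 - h)))"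
      using nm_tri by simp
    also have "\<dots> \<le> 1/2 * (nm (1 + h) * nm (1 + h) + nm (1 - h) * nm (1 - h))"
      using nm_mult[of "1+h" "1+h"] nm_mult[of "1-h" "1-h"] by simp
    also have "\<dots> \<le> 1/2 * (1 + 1)"
      using p m nm_nonneg[of "1+h"] nm_nonneg[of "1-h"]
      by (intro mult_left_mono add_mono mult_le_one) auto
    finally show ?thesis by simp
  qed
  have gi: "good c" if c: "c = \<i> \<or> c = - \<i>" for c
  proof -
    have st1: "st (1 + ph c * h) = 1 + ph (- c) * h"
    proof -
      have "st (1 + ph c * h) = 1 + h * ph (cnj c)"
        by (simp add: st_add st_one st_mult sa st_ph)
      also have "cnj c = - c" using c by auto
      finally show ?thesis by (simp add: ph_comm)
    qed
    have pr: "(1 + ph (- c) * h) * (1 + ph c * h) = 1 + h * h"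
      using prod_lin[of "-c" h c] c by (auto simp: ph_zero ph_one)
    have "(nm (1 + ph c * h))\<^sup>2 = nm (1 + h * h)"
      using cid[of "1 + ph c * h"] st1 pr by simp
    then show ?thesis unfolding good_def using hh sq_le1'' nm_nonneg by simp
  qed
  have gI: "good \<i>" using gi by auto
  have gmI: "good (- \<i>)" using gi by auto
  have g1: "good 1" unfolding good_def using p by (simp add: ph_one)
  have gm1: "good (-1)" unfolding good_def using m by (simp add: ph_minus ph_one)
  have conv: "good (complex_of_real t * a + complex_of_real (1 - t) * b)"
    if ga: "good a" and gb: "good b" and t: "0 \<le> t" "t \<le> 1" for a b t
  proof -
    have e: "1 + ph (complex_of_real t * a + complex_of_real (1 - t) * b) * h
       = ph (complex_of_real t) * (1 + ph a * h) + ph (complex_of_real (1 - t)) * (1 + ph b * h)"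
    proof -
      have s1: "ph (complex_of_real t) + ph (complex_of_real (1 - t)) = 1"
        by (simp add: ph_add[symmetric] ph_one)
      have "ph (complex_of_real t) * (1 + ph a * h) + ph (complex_of_real (1 - t)) * (1 + ph b * h)
         = (ph (complex_of_real t) + ph (complex_of_real (1 - t)))
           + (ph (complex_of_real t * a) * h + ph (complex_of_real (1 - t) * b) * h)"
        by (simp only: distrib_left ph_multx mult_1_right add_ac)
      also have "\<dots> = 1 + ph (complex_of_real t * a + complex_of_real (1 - t) * b) * h"
        by (simp only: s1 ph_add distrib_right)
      finally show ?thesis by simp

    qed
    have "nm (1 + ph (complex_of_real t * a + complex_of_real (1 - t) * b) * h)
       \<le> nm (ph (complex_of_real t) * (1 + ph a * h)) + nm (ph (complex_of_real (1 - t)) * (1 + ph b * h))"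
      unfolding e by (rule nm_tri)
    also have "\<dots> = t * nm (1 + ph a * h) + (1 - t) * nm (1 + ph b * h)"
    proof -
      have "cmod (complex_of_real (1 - t)) = 1 - t" using t norm_of_real[of "1 - t"] by (simp only: abs_of_nonneg diff_ge_0_iff_ge)
      moreover have "cmod (complex_of_real t) = t" using t by simp
      ultimately show ?thesis by (simp only: nm_ph)
    qed
    also have "\<dots> \<le> t * 1 + (1 - t) * 1"
      using ga gb t unfolding good_def by (intro add_mono mult_left_mono) auto
    finally show ?thesis unfolding good_def by simp
  qed
  have greal: "good (complex_of_real x)" if "\<bar>x\<bar> \<le> 1" for x
  proof -
    have "good (complex_of_real ((1 + x)/2) * 1 + complex_of_real (1 - (1 + x)/2) * (-1))"
      by (rule conv[OF g1 gm1]) (use that in auto)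
    moreover have "complex_of_real ((1 + x)/2) * 1 + complex_of_real (1 - (1 + x)/2) * (-1) = complex_of_real x"
      by (simp add: field_simps)
    ultimately show ?thesis by simp
  qed
  have gimag: "good (\<i> * complex_of_real y)" if "\<bar>y\<bar> \<le> 1" for y
  proof -
    have "good (complex_of_real ((1 + y)/2) * \<i> + complex_of_real (1 - (1 + y)/2) * (-\<i>))"
      by (rule conv[OF gI gmI]) (use that in auto)
    moreover have "complex_of_real ((1 + y)/2) * \<i> + complex_of_real (1 - (1 + y)/2) * (-\<i>) = \<i> * complex_of_real y"
      by (simp add: field_simps)
    ultimately show ?thesis by simp
  qed
  have gdisc: "good z" if "(cmod z)\<^sup>2 \<le> 1/4" for z
  proof -
    have "cmod z \<le> 1/2"
      using that power2_le_imp_le[of "cmod z" "1/2"] by (simp add: power_divide)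
    then have r: "\<bar>2 * Re z\<bar> \<le> 1" and i: "\<bar>2 * Im z\<bar> \<le> 1"
      using abs_Re_le_cmod[of z] abs_Im_le_cmod[of z] by auto
    have "good (complex_of_real (1/2) * complex_of_real (2 * Re z) + complex_of_real (1 - 1/2) * (\<i> * complex_of_real (2 * Im z)))"
      using conv[OF greal[OF r] gimag[OF i], of "1/2"] by simp
    moreover have "complex_of_real (1/2) * complex_of_real (2 * Re z) + complex_of_real (1 - 1/2) * (\<i> * complex_of_real (2 * Im z)) = z"
      by (simp add: complex_eq_iff)
    ultimately show ?thesis by simp
  qed
  have step: "\<forall>z. (cmod z)\<^sup>2 \<le> 2 * R \<longrightarrow> good z" if IH: "\<forall>z. (cmod z)\<^sup>2 \<le> R \<longrightarrow> good z" for R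
  proof (intro allI impI)
    fix z assume z: "(cmod z)\<^sup>2 \<le> 2 * R"
    define a where "a = z * (1 + \<i>) / 2"
    define b where "b = z * (1 - \<i>) / 2"
    have c1: "(cmod (1 + \<i>))\<^sup>2 = 2" by (simp add: cmod_power2)
    have c2: "(cmod (1 - \<i>))\<^sup>2 = 2" by (simp add: cmod_power2)
    have "(cmod a)\<^sup>2 = (cmod z)\<^sup>2 * (cmod (1 + \<i>))\<^sup>2 / 4"
      unfolding a_def by (simp add: norm_mult norm_divide power_mult_distrib power_divide)
    then have ca: "(cmod a)\<^sup>2 = (cmod z)\<^sup>2 / 2" using c1 by simp
    have "(cmod b)\<^sup>2 = (cmod z)\<^sup>2 * (cmod (1 - \<i>))\<^sup>2 / 4"
      unfolding b_def by (simp add: norm_mult norm_divide power_mult_distrib power_divide)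
    then have cb: "(cmod b)\<^sup>2 = (cmod z)\<^sup>2 / 2" using c2 by simp
    have ga: "good a" using IH ca z by auto
    have gb: "good b" using IH cb z by auto
    have ab: "a + a + (b + b) = 2 * z" unfolding a_def b_def by (simp add: field_simps)
    have ab2: "a * a + b * b = 0" unfolding a_def b_def by (simp add: field_simps)
    have "(1 + ph a * h) * (1 + ph a * h) + (1 + ph b * h) * (1 + ph b * h)
        = 1 + ph (a + a) * h + ph (a * a) * (h * h) + (1 + ph (b + b) * h + ph (b * b) * (h * h))"
      by (simp add: prod_lin)
    also have "\<dots> = 1 + 1 + ph (a + a + (b + b)) * h + ph (a * a + b * b) * (h * h)"
      by (simp add: ph_add algebra_simps)
    also have "\<dots> = 1 + 1 + ph (2 * z) * h"
      using ab ab2 by (simp add: ph_zero)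
    also have "\<dots> = (1 + ph z * h) + (1 + ph z * h)"
      by (simp add: ph_mult ph_two algebra_simps mult_2)
    finally have e: "(1 + ph a * h) * (1 + ph a * h) + (1 + ph b * h) * (1 + ph b * h) = (1 + ph z * h) + (1 + ph z * h)" .
    have "1 + ph z * h = ph (1/2) * ((1 + ph a * h) * (1 + ph a * h) + (1 + ph b * h) * (1 + ph b * h))"
      using e ph_half2 by simp
    then have "nm (1 + ph z * h) = 1/2 * nm ((1 + ph a * h) * (1 + ph a * h) + (1 + ph b * h) * (1 + ph b * h))"
      using nm_ph[of "1/2"] by simp
    also have "\<dots> \<le> 1/2 * (nm ((1 + ph a * h) * (1 + ph a * h)) + nm ((1 + ph b * h) * (1 + ph b * h)))"
      using nm_tri by simp
    also have "\<dots> \<le> 1/2 * (nm (1 + ph a * h) * nm (1 + ph a * h) + nm (1 + ph b * h) * nm (1 + ph b * h))"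
      using nm_mult by (simp add: add_mono)
    also have "\<dots> \<le> 1/2 * (1 + 1)"
      using ga gb nm_nonneg unfolding good_def
      by (intro mult_left_mono add_mono mult_le_one) auto
    finally show "good z" unfolding good_def by simp
  qed
  have all: "\<forall>z. (cmod z)\<^sup>2 \<le> 2 ^ n / 4 \<longrightarrow> good z" for n
  proof (induction n)
    case 0 then show ?case using gdisc by simp
  next
    case (Suc n)
    from step[OF Suc] show ?case by (simp add: mult.assoc)
  qed
  have bound: "2 ^ m * nm h \<le> 4" for m :: nat
  proof -
    define x :: real where "x = 2 ^ m / 2"
    have x0: "0 \<le> x" unfolding x_def by simp
    have cx: "cmod (complex_of_real x) = x" using x0 by simp
    have x2: "x\<^sup>2 = 2 ^ (2 * m) / 4" unfolding x_def by (simp add: power_divide power_even_eq)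
    have "(cmod (complex_of_real x))\<^sup>2 \<le> 2 ^ (2 * m) / 4"
      using cx x2 by simp
    then have g: "good (complex_of_real x)" using all by blast
    have "nm (ph (complex_of_real x) * h) \<le> nm (1 + ph (complex_of_real x) * h) + nm 1"
      using nm_diff[of "1 + ph (complex_of_real x) * h" 1] by simp
    also have "\<dots> \<le> 2" using g nm_one unfolding good_def by simp
    finally have "x * nm h \<le> 2" using nm_ph[of "complex_of_real x" h] cx by simp
    then show ?thesis unfolding x_def by simp
  qed
  show "h = 0"
  proof (rule ccontr)
    assume "h \<noteq> 0"
    then have pos: "nm h > 0" using nm_eq0 nm_nonneg by (metis less_eq_real_def)
    obtain m where "4 / nm h < 2 ^ m" using real_arch_pow[of 2 "4 / nm h"] by auto
    then have "4 < 2 ^ m * nm h" using pos by (simp add: field_simps)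
    then show False using bound[of m] by simp
  qed
qed


lemma le1_pow: assumes "0 \<le> x" "\<forall>k. x ^ (2 ^ k) \<le> 2" shows "x \<le> (1::real)"
proof (rule ccontr)
  assume "\<not> x \<le> 1" then have x1: "1 < x" by simp
  obtain n where n: "2 < x ^ n" using real_arch_pow[OF x1] by blast
  have "n \<le> 2 ^ n" by (simp add: less_imp_le)
  then have "x ^ n \<le> x ^ (2 ^ n)" using x1 by (intro power_increasing) simp_all
  then show False using n assms(2) by (metis order.strict_trans2 not_less)
qed

lemma st_sum: "st (sum f S) = (\<Sum>m\<in>S. st (f m))"
proof (induction S rule: infinite_finite_induct)
  case (infinite A) then show ?case by (simp add: st_zero)
next
  case empty then show ?case by (simp add: st_zero)
next
  case (insert x F) then show ?case by (simp add: st_add)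
qed

lemma phq: "u * (ph c * x) = ph c * (u * x)"
  by (metis mult.assoc ph_comm)

lemma Block:
  assumes q: "st q = q" "q * q = q" and y: "st y = y" "nm y \<le> 1"
  shows "nm ((1 - q) + q * y * q) \<le> 1"
proof -
  define a where "a = 1 - q"
  define w where "w = q * y * q"
  have qw: "q * (q * y * q) = q * y * q" using q(2) by (metis mult.assoc)
  have wq: "q * y * q * q = q * y * q" using q(2) by (metis mult.assoc)
  have aa: "a * a = a" unfolding a_def using q(2) by (simp add: algebra_simps)
  have aw: "a * w = 0" unfolding a_def w_def by (simp add: left_diff_distrib qw)
  have wa: "w * a = 0" unfolding a_def w_def by (simp add: right_diff_distrib wq)
  have pw: "(a + w) ^ Suc n = a + w ^ Suc n" for n
  proof (induction n)
    case 0 then show ?case by simp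
  next
    case (Suc n)
    have wna: "w ^ Suc n * a = 0" by (simp add: power_Suc2 mult.assoc wa del: power_Suc)
    have "(a + w) ^ Suc (Suc n) = (a + w ^ Suc n) * (a + w)"
      using Suc by (simp only: power_Suc2[of "a + w" "Suc n"])
    also have "\<dots> = a * a + a * w + w ^ Suc n * a + w ^ Suc n * w"
      by (simp add: algebra_simps)
    also have "\<dots> = a + w ^ Suc (Suc n)"
      using aa aw wna by (simp only: power_Suc2[of w "Suc n"]) simp
    finally show ?case .
  qed
  have nq: "nm q \<le> 1" using proj_nm q by blast
  have nw: "nm w \<le> 1"
  proof -
    have "nm w \<le> nm (q * y) * nm q" unfolding w_def by (rule nm_mult)
    also have "\<dots> \<le> (nm q * nm y) * nm q"
      using nm_mult[of q y] nm_nonneg[of q] by (simp add: mult_right_mono)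
    also have "\<dots> \<le> 1" using nq y(2) nm_nonneg[of q] nm_nonneg[of y]
      by (simp add: mult_le_one)
    finally show ?thesis .
  qed
  have sa: "st a = a" unfolding a_def by (simp add: st_diff st_one q(1))
  have na: "nm a \<le> 1" using proj_nm[OF sa aa] .
  have sw: "st w = w" unfolding w_def by (simp add: st_mult q(1) y(1) mult.assoc)
  have sz: "st (a + w) = a + w" by (simp add: st_add sa sw)
  have "\<forall>k. nm (a + w) ^ (2 ^ k) \<le> 2"
  proof
    fix k :: nat
    obtain n where n: "2 ^ k = Suc n" using nat.exhaust[of "2^k"] by (metis not_less0 zero_less_power zero_less_numeral)
    have "nm (a + w) ^ (2 ^ k) = nm ((a + w) ^ (2 ^ k))" using sa_pow2[OF sz] by simp
    also have "\<dots> = nm (a + w ^ Suc n)" using pw n by simp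
    also have "\<dots> \<le> nm a + nm (w ^ Suc n)" by (rule nm_tri)
    also have "\<dots> \<le> 1 + 1"
    proof -
      have "nm (w ^ Suc n) \<le> nm w ^ Suc n" by (rule nm_pow)
      also have "\<dots> \<le> 1" by (rule power_le_one[OF nm_nonneg nw])
      finally show ?thesis using na by simp
    qed
    finally show "nm (a + w) ^ (2 ^ k) \<le> 2" by simp
  qed
  then have "nm (a + w) \<le> 1" using le1_pow nm_nonneg by blast
  then show ?thesis unfolding a_def w_def .
qed

lemma orth:
  assumes fin: "finite I" and pr: "\<forall>m\<in>I. st (P m) = P m \<and> P m * P m = P m"
    and s1: "sum P I = 1" and ab: "a \<in> I" "b \<in> I" "a \<noteq> b"
  shows "P a * P b = 0"
proof -
  define q where "q = P a"
  define r where "r = P b"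
  define S where "S = I - {a, b}"
  define s where "s = sum P S"
  have finS: "finite S" unfolding S_def using fin by simp
  have sum3: "q + r + s = 1"
  proof -
    have "sum P I = P a + sum P (I - {a})" using fin ab(1) by (simp add: sum.remove)
    also have "sum P (I - {a}) = P b + sum P (I - {a} - {b})"
      using fin ab by (simp add: sum.remove)
    also have "I - {a} - {b} = S" unfolding S_def by auto
    finally show ?thesis using s1 unfolding q_def r_def s_def by (simp add: add.assoc)
  qed
  have q1: "st q = q" and q2: "q * q = q" using pr ab unfolding q_def by auto
  have r1: "st r = r" and r2: "r * r = r" using pr ab unfolding r_def by auto
  have s1': "st s = s" unfolding s_def using pr by (simp add: st_sum S_def)
  have r_eq: "r = 1 - q - s" using sum3 by (simp add: algebra_simps eq_diff_eq)
  have qrq: "q * r * q = - (q * s * q)"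
    unfolding r_eq by (simp add: algebra_simps q2)
  define w where "w = q * r * q"
  define e :: real where "e = 1 / (real (card S) + 1)"
  have e0: "0 < e" unfolding e_def by simp
  have e1: "e \<le> 1" unfolding e_def by simp
  have eS: "e * real (card S) \<le> 1" unfolding e_def by (simp add: field_simps)
  have sw: "st w = w" unfolding w_def by (simp add: st_mult q1 r1 mult.assoc)
  have cnje: "cnj (complex_of_real e) = complex_of_real e" by simp
  have sew: "st (ph (complex_of_real e) * w) = ph (complex_of_real e) * w"
    by (simp add: st_mult st_ph sw ph_comm)
  have nre: "nm (1 - ph (complex_of_real e) * r) \<le> 1"
  proof -
    have "1 - ph (complex_of_real e) * r = ph (complex_of_real (1 - e)) * 1 + ph (complex_of_real e) * (1 - r)"
    proof -
      have "ph (complex_of_real (1 - e)) + ph (complex_of_real e) = 1"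
        by (simp add: ph_add[symmetric] ph_one)
      then show ?thesis by (simp add: algebra_simps)
    qed
    then have "nm (1 - ph (complex_of_real e) * r) \<le> nm (ph (complex_of_real (1 - e)) * 1) + nm (ph (complex_of_real e) * (1 - r))"
      using nm_tri by simp
    also have "\<dots> = (1 - e) * nm 1 + e * nm (1 - r)"
    proof -
      have "cmod (complex_of_real (1 - e)) = 1 - e" using e1 norm_of_real[of "1 - e"] by (simp only: abs_of_nonneg diff_ge_0_iff_ge)
      moreover have "cmod (complex_of_real e) = e" using e0 by simp
      ultimately show ?thesis by (simp only: nm_ph)
    qed
    also have "\<dots> \<le> (1 - e) * 1 + e * 1"
    proof -
      have "nm (1 - r) \<le> 1" by (rule proj_nm) (simp_all add: st_diff st_one r1 algebra_simps r2)
      then show ?thesis using e0 e1 nm_one by (intro add_mono mult_left_mono) auto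
    qed
    finally show ?thesis by simp
  qed
  have nse: "nm (1 - ph (complex_of_real e) * s) \<le> 1"
  proof -
    have eq: "1 - ph (complex_of_real e) * s = ph (complex_of_real (1 - e * real (card S))) * 1
        + (\<Sum>m\<in>S. ph (complex_of_real e) * (1 - P m))"
    proof -
      have "(\<Sum>m\<in>S. ph (complex_of_real e) * (1 - P m)) = ph (complex_of_real e) * (of_nat (card S) - s)"
        unfolding s_def by (simp add: sum_distrib_left[symmetric] sum_subtractf)
      also have "\<dots> = ph (complex_of_real (e * real (card S))) - ph (complex_of_real e) * s"
        by (simp add: right_diff_distrib ph_mult ph_of_nat[symmetric])
      finally have "(\<Sum>m\<in>S. ph (complex_of_real e) * (1 - P m)) = ph (complex_of_real (e * real (card S))) - ph (complex_of_real e) * s" .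
      moreover have "ph (complex_of_real (1 - e * real (card S))) = 1 - ph (complex_of_real (e * real (card S)))"
        by (simp add: ph_diff ph_one)
      ultimately show ?thesis by simp
    qed
    have "nm (1 - ph (complex_of_real e) * s) \<le> nm (ph (complex_of_real (1 - e * real (card S))) * 1)
        + nm (\<Sum>m\<in>S. ph (complex_of_real e) * (1 - P m))"
      unfolding eq by (rule nm_tri)
    also have "\<dots> \<le> (1 - e * real (card S)) * 1 + (\<Sum>m\<in>S. e * 1)"
    proof (rule add_mono)
      have "cmod (complex_of_real (1 - e * real (card S))) = 1 - e * real (card S)"
        using eS norm_of_real[of "1 - e * real (card S)"] by (simp only: abs_of_nonneg diff_ge_0_iff_ge)
      then show "nm (ph (complex_of_real (1 - e * real (card S))) * 1) \<le> (1 - e * real (card S)) * 1"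
        using nm_one eS by (simp only: nm_ph) (simp add: mult_left_le)
      have "nm (\<Sum>m\<in>S. ph (complex_of_real e) * (1 - P m)) \<le> (\<Sum>m\<in>S. nm (ph (complex_of_real e) * (1 - P m)))"
        by (rule nm_sum)
      also have "\<dots> \<le> (\<Sum>m\<in>S. e * 1)"
      proof (rule sum_mono)
        fix m assume "m \<in> S"
        then have m: "st (P m) = P m" "P m * P m = P m" using pr S_def by auto
        have "nm (1 - P m) \<le> 1" by (rule proj_nm) (simp_all add: st_diff st_one m algebra_simps)
        moreover have "cmod (complex_of_real e) = e" using e0 by simp
        ultimately show "nm (ph (complex_of_real e) * (1 - P m)) \<le> e * 1"
          using e0 by (simp add: nm_ph)
      qed
      finally show "nm (\<Sum>m\<in>S. ph (complex_of_real e) * (1 - P m)) \<le> (\<Sum>m\<in>S. e * 1)" .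
    qed
    also have "\<dots> = 1" by simp
    finally show ?thesis .
  qed
  have b1: "nm (1 - ph (complex_of_real e) * w) \<le> 1"
  proof -
    have eq: "1 - ph (complex_of_real e) * w = (1 - q) + q * (1 - ph (complex_of_real e) * r) * q"
      unfolding w_def by (simp add: algebra_simps phq q2)
    show ?thesis unfolding eq
      by (rule Block[OF q1 q2 _ nre]) (simp add: st_diff st_one st_mult st_ph r1 ph_comm)
  qed
  have b2: "nm (1 + ph (complex_of_real e) * w) \<le> 1"
  proof -
    have eq: "1 + ph (complex_of_real e) * w = (1 - q) + q * (1 - ph (complex_of_real e) * s) * q"
      unfolding w_def qrq by (simp add: algebra_simps phq q2)
    show ?thesis unfolding eq
      by (rule Block[OF q1 q2 _ nse]) (simp add: st_diff st_one st_mult st_ph s1' ph_comm)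
  qed
  have "ph (complex_of_real e) * w = 0" using Zlemma[OF sew b2 b1] .
  then have "e * nm w = 0" using nm_ph[of "complex_of_real e" w] e0 by (simp add: nm_zero)
  then have w0: "w = 0" using e0 nm_eq0 by simp
  have "(nm (r * q))\<^sup>2 = nm (st (r * q) * (r * q))" by (simp add: cid)
  also have "st (r * q) * (r * q) = w" unfolding w_def
    by (simp add: st_mult q1 r1 mult.assoc[symmetric] r2) (simp add: mult.assoc r2)
  finally have "r * q = 0" using w0 nm_eq0 nm_zero by simp
  then have "st (r * q) = 0" by (simp add: st_zero)
  then show ?thesis unfolding q_def r_def by (simp add: st_mult q1[unfolded q_def] r1[unfolded r_def])
qed

end

locale drg =
  fixes V :: "'v set" and E :: "'v \<Rightarrow> 'v \<Rightarrow> bool" and b c :: "nat \<Rightarrow> nat"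
  assumes sg: "simple_graph V E" and con: "connected_graph V E" and cub: "cubic V E"
    and DR: "\<forall>v\<in>V. \<forall>w\<in>V.
        card {x. E w x \<and> gdist E v x = gdist E v w + 1} = b (gdist E v w) \<and>
        card {x. E w x \<and> gdist E v x + 1 = gdist E v w} = c (gdist E v w)"
    and big: "card V \<ge> 10"
begin

lemma finV: "finite V" using sg unfolding simple_graph_def by blast
lemma E_in: "E x y \<Longrightarrow> x \<in> V \<and> y \<in> V" using sg unfolding simple_graph_def by blast
lemma E_sym: "E x y \<Longrightarrow> E y x" using sg unfolding simple_graph_def by blast
lemma E_irr: "\<not> E x x" using sg unfolding simple_graph_def by blast
lemma N_sub: "{y. E x y} \<subseteq> V" using E_in by blast
lemma finN: "finite {y. E x y}" using N_sub finV finite_subset by blast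
lemma finS: "finite {y. E x y \<and> P y}" using finN by (rule finite_subset[rotated]) blast
lemma cardN: "x \<in> V \<Longrightarrow> card {y. E x y} = 3" using cub unfolding cubic_def by blast
lemma Bset: "v \<in> V \<Longrightarrow> w \<in> V \<Longrightarrow> card {x. E w x \<and> gdist E v x = gdist E v w + 1} = b (gdist E v w)"
  using DR by blast
lemma Cset: "v \<in> V \<Longrightarrow> w \<in> V \<Longrightarrow> card {x. E w x \<and> gdist E v x + 1 = gdist E v w} = c (gdist E v w)"
  using DR by blast

lemma reach: "x \<in> V \<Longrightarrow> y \<in> V \<Longrightarrow> \<exists>n. (E ^^ n) x y"
  using con unfolding connected_graph_def by blast
lemma gd_att: "x \<in> V \<Longrightarrow> y \<in> V \<Longrightarrow> (E ^^ gdist E x y) x y"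
  unfolding gdist_def using reach by (metis LeastI_ex)
lemma gd_le: "(E ^^ n) x y \<Longrightarrow> gdist E x y \<le> n"
  unfolding gdist_def by (rule Least_le)
lemma gd_self: "gdist E x x = 0"
  using gd_le[of 0 x x] relpowp_0_I[of E x] by simp
lemma gd0: "x \<in> V \<Longrightarrow> y \<in> V \<Longrightarrow> gdist E x y = 0 \<longleftrightarrow> x = y"
  using gd_att[of x y] gd_self by (auto elim: relpowp_0_E)
lemma gd1: assumes "x \<in> V" "y \<in> V" shows "gdist E x y = 1 \<longleftrightarrow> E x y"
proof
  assume "gdist E x y = 1" then show "E x y" using gd_att[OF assms] by (auto simp: relcompp_apply)
next
  assume e: "E x y"
  then have "gdist E x y \<le> 1" using gd_le[of 1 x y] by (auto simp: relcompp_apply)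
  moreover have "x \<noteq> y" using e E_irr by blast
  then have "gdist E x y \<noteq> 0" using gd0 assms by simp
  ultimately show "gdist E x y = 1" by simp
qed
lemma gd_succ: assumes "E w x" "v \<in> V" shows "gdist E v x \<le> gdist E v w + 1"
proof -
  have "(E ^^ gdist E v w) v w" using gd_att assms E_in by blast
  then have "(E ^^ Suc (gdist E v w)) v x" using assms(1) by (rule relpowp_Suc_I)
  then show ?thesis using gd_le by fastforce
qed
lemma gd_pred: assumes "v \<in> V" "w \<in> V" "gdist E v w = Suc d"
  shows "\<exists>x. E x w \<and> gdist E v x = d"
proof -
  have "(E ^^ Suc d) v w" using gd_att[OF assms(1,2)] assms(3) by simp
  then obtain x where x: "(E ^^ d) v x" "E x w" by (auto elim: relpowp_Suc_E)
  have "gdist E v x \<le> d" using gd_le x(1) .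
  moreover have "gdist E v w \<le> gdist E v x + 1" using gd_succ[OF x(2) assms(1)] .
  ultimately show ?thesis using x(2) assms(3) by auto
qed
lemma gd2: assumes "v \<in> V" "w \<in> V"
  shows "gdist E v w = 2 \<longleftrightarrow> (v \<noteq> w \<and> \<not> E v w \<and> (\<exists>m. E v m \<and> E m w))"
proof
  assume d: "gdist E v w = 2"
  then have "v \<noteq> w" using gd0[OF assms] by auto
  moreover have "\<not> E v w" using gd1[OF assms] d by auto
  moreover have "(E ^^ Suc (Suc 0)) v w" using gd_att[OF assms] d by (simp add: numeral_2_eq_2)
  then have "\<exists>m. E v m \<and> E m w" by (auto elim!: relpowp_Suc_E relpowp_0_E)
  ultimately show "v \<noteq> w \<and> \<not> E v w \<and> (\<exists>m. E v m \<and> E m w)" by blast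
next
  assume h: "v \<noteq> w \<and> \<not> E v w \<and> (\<exists>m. E v m \<and> E m w)"
  then obtain m where m: "E v m" "E m w" by blast
  have "(E ^^ Suc (Suc 0)) v w" using m by (meson relpowp_Suc_I relpowp_0_I)
  then have "gdist E v w \<le> 2" using gd_le by (fastforce simp: numeral_2_eq_2)
  moreover have "gdist E v w \<noteq> 0" using gd0[OF assms] h by simp
  moreover have "gdist E v w \<noteq> 1" using gd1[OF assms] h by simp
  ultimately show "gdist E v w = 2" by simp
qed

lemma closure: assumes "a \<in> S" "\<forall>w\<in>S. \<forall>x. E w x \<longrightarrow> x \<in> S" "a \<in> V"
  shows "V \<subseteq> S"
proof
  fix y assume y: "y \<in> V"
  obtain n where n: "(E ^^ n) a y" using reach[OF assms(3) y] by blast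
  have "(E ^^ n) a z \<Longrightarrow> z \<in> S" for z
  proof (induction n arbitrary: z)
    case 0 then show ?case using assms(1) by (auto elim: relpowp_0_E)
  next
    case (Suc n)
    then obtain x where "(E ^^ n) a x" "E x z" by (auto elim: relpowp_Suc_E)
    then show ?case using Suc.IH assms(2) by blast
  qed
  then show "y \<in> S" using n .
qed

definition T where "T v w = {x. E v x \<and> E w x}"

lemma EP: assumes e: "E v w" shows "card (T v w) + b 1 = 2"
proof -
  have v: "v \<in> V" and w: "w \<in> V" using E_in e by auto
  have d1: "gdist E v w = 1" using gd1 v w e by simp
  define B where "B = {x. E w x \<and> gdist E v x = gdist E v w + 1}"
  have cB: "card B = b 1" unfolding B_def using Bset[OF v w] d1 by simp
  have Neq: "{x. E w x} = insert v (T v w \<union> B)"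
  proof (rule set_eqI, rule iffI)
    fix x assume x: "x \<in> {x. E w x}"
    then have xv: "x \<in> V" using E_in by auto
    have "gdist E v x \<le> 2" using gd_succ[of w x v] x v d1 by simp
    then consider "gdist E v x = 0" | "gdist E v x = 1" | "gdist E v x = 2" by linarith
    then show "x \<in> insert v (T v w \<union> B)"
    proof cases
      case 1 then show ?thesis using gd0[OF v xv] by simp
    next
      case 2 then show ?thesis using gd1[OF v xv] x unfolding T_def by simp
    next
      case 3 then show ?thesis using x d1 unfolding B_def by simp
    qed
  next
    fix x assume "x \<in> insert v (T v w \<union> B)"
    then show "x \<in> {x. E w x}" using e E_sym unfolding T_def B_def by auto
  qed
  have finT: "finite (T v w)" unfolding T_def using finS by (simp add: conj_commute finS)
  have finB: "finite B" unfolding B_def by (rule finS)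
  have vn: "v \<notin> T v w \<union> B" unfolding T_def B_def using E_irr gd_self by auto
  have disj: "T v w \<inter> B = {}" unfolding T_def B_def using gd1 E_in d1 by fastforce
  have "3 = card {x. E w x}" using cardN w by simp
  also have "\<dots> = Suc (card (T v w) + card B)"
    unfolding Neq using finT finB vn disj by (simp add: card_Un_disjoint)
  finally show ?thesis using cB by simp
qed

lemma aux_adj:
  assumes Na: "{y. E a y} = {y1, y2, y3}" and d: "y1 \<noteq> y2" "y2 \<noteq> y3" "y1 \<noteq> y3"
    and t: "\<forall>y\<in>{y1,y2,y3}. card (T a y) = t" and t0: "t \<noteq> 0"
  shows "E y1 y2"
proof (rule ccontr)
  assume n12: "\<not> E y1 y2"
  have finT: "finite (T a y)" for y unfolding T_def using finS by simp
  have mem: "x = y1 \<or> x = y2 \<or> x = y3" if "E a x" for x using Na that by blast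
  have sub1: "T a y1 \<subseteq> {y3}" unfolding T_def using mem n12 E_irr by blast
  have sub2: "T a y2 \<subseteq> {y3}" unfolding T_def using mem n12 E_irr E_sym by blast
  have c1: "card (T a y1) = t" and c2: "card (T a y2) = t" and c3: "card (T a y3) = t" using t by auto
  have "card (T a y1) \<le> 1" using card_mono[OF _ sub1] by simp
  then have t1: "t = 1" using c1 t0 by simp
  have "T a y1 \<noteq> {}" using c1 t0 by auto
  then have "T a y1 = {y3}" using sub1 by blast
  then have e13: "E y1 y3" unfolding T_def by auto
  have "T a y2 \<noteq> {}" using c2 t0 by auto
  then have "T a y2 = {y3}" using sub2 by blast
  then have e23: "E y2 y3" unfolding T_def by auto
  have "{y1, y2} \<subseteq> T a y3" unfolding T_def using Na e13 e23 E_sym by auto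
  then have "card {y1, y2} \<le> card (T a y3)" using finT by (rule card_mono[rotated])
  then show False using c3 t1 d by simp
qed

lemma triangle_free: assumes e: "E v w" shows "T v w = {}"
proof -
  define t where "t = 2 - b 1"
  have ct: "card (T x y) = t" if "E x y" for x y using EP[OF that] unfolding t_def by simp
  have finT: "finite (T x y)" for x y unfolding T_def using finS by simp
  have "t = 0"
  proof (rule ccontr)
    assume t0: "t \<noteq> 0"
    have "V \<noteq> {}" using big by auto
    then obtain a where a: "a \<in> V" by blast
    obtain y1 y2 y3 where Na: "{y. E a y} = {y1, y2, y3}" and d: "y1 \<noteq> y2" "y2 \<noteq> y3" "y1 \<noteq> y3"
      using cardN[OF a] unfolding card_3_iff by blast
    have ty: "\<forall>y\<in>{y1,y2,y3}. card (T a y) = t" using ct Na by auto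
    have e12: "E y1 y2" by (rule aux_adj[OF Na d ty t0])
    have e13: "E y1 y3"
      by (rule aux_adj[of a y1 y3 y2]) (use Na d ty t0 in auto)
    have e23: "E y2 y3"
      by (rule aux_adj[of a y2 y3 y1]) (use Na d ty t0 in auto)
    have Ny: "{x. E y x} \<subseteq> {a, y1, y2, y3}" if y: "y \<in> {y1, y2, y3}" for y
    proof -
      have yV: "y \<in> V" using y Na E_in by blast
      have sub: "{a, y1, y2, y3} - {y} \<subseteq> {x. E y x}"
        using y Na e12 e13 e23 E_sym by auto
      have "card ({a, y1, y2, y3} - {y}) = 3"
      proof -
        have "a \<notin> {y1, y2, y3}" using Na E_irr by auto
        then show ?thesis using y d by auto
      qed
      then have "{a, y1, y2, y3} - {y} = {x. E y x}"
        using card_subset_eq[OF finN sub] cardN[OF yV] by simp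
      then show ?thesis by auto
    qed
    have "V \<subseteq> {a, y1, y2, y3}"
    proof (rule closure[OF _ _ a])
      show "a \<in> {a, y1, y2, y3}" by simp
      show "\<forall>w\<in>{a, y1, y2, y3}. \<forall>x. E w x \<longrightarrow> x \<in> {a, y1, y2, y3}"
        using Ny Na by blast
    qed
    then have "card V \<le> card {a, y1, y2, y3}" by (simp add: card_mono)
    also have "\<dots> \<le> 4" by (simp add: card_insert_le_m1)
    finally show False using big by simp
  qed
  then show ?thesis using ct[OF e] finT by simp
qed


lemma two_elems: assumes "finite A" "card A \<ge> 2" shows "\<exists>x y. x \<in> A \<and> y \<in> A \<and> x \<noteq> y"
proof (rule ccontr)
  assume "\<not> ?thesis"
  then have "card A \<le> Suc 0" using card_le_Suc0_iff_eq[OF assms(1)] by blast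
  then show False using assms(2) by simp
qed

definition L where "L a i = {w \<in> V. gdist E a w = i}"

lemma finL: "finite (L a i)" unfolding L_def using finV by simp

lemma DC: assumes a: "a \<in> V" shows "card (L a i) * b i = card (L a (Suc i)) * c (Suc i)"
proof -
  define B where "B = (\<lambda>w. {x. E w x \<and> gdist E a x = Suc i})"
  define C where "C = (\<lambda>x. {w. E x w \<and> gdist E a w + 1 = Suc i})"
  have finB: "finite (B w)" for w unfolding B_def by (rule finS)
  have finC: "finite (C w)" for w unfolding C_def by (rule finS)
  have "card (Sigma (L a i) B) = (\<Sum>w\<in>L a i. card (B w))"
    using finL finB by simp
  also have "\<dots> = (\<Sum>w\<in>L a i. b i)"
  proof (rule sum.cong[OF refl])
    fix w assume w: "w \<in> L a i"
    then have "w \<in> V" "gdist E a w = i" unfolding L_def by auto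
    then show "card (B w) = b i" unfolding B_def using Bset[OF a, of w] by simp
  qed
  finally have s1: "card (Sigma (L a i) B) = card (L a i) * b i" by simp
  have "card (Sigma (L a (Suc i)) C) = (\<Sum>w\<in>L a (Suc i). card (C w))"
    using finL finC by simp
  also have "\<dots> = (\<Sum>w\<in>L a (Suc i). c (Suc i))"
  proof (rule sum.cong[OF refl])
    fix w assume w: "w \<in> L a (Suc i)"
    then have "w \<in> V" "gdist E a w = Suc i" unfolding L_def by auto
    then show "card (C w) = c (Suc i)" unfolding C_def using Cset[OF a, of w] by simp
  qed
  finally have s2: "card (Sigma (L a (Suc i)) C) = card (L a (Suc i)) * c (Suc i)" by simp
  have sw: "Sigma (L a (Suc i)) C = prod.swap ` Sigma (L a i) B"
  proof (rule set_eqI, rule iffI)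
    fix p assume "p \<in> Sigma (L a (Suc i)) C"
    then obtain x w where p: "p = (x, w)" "x \<in> L a (Suc i)" "w \<in> C x" by auto
    then have "(w, x) \<in> Sigma (L a i) B" unfolding L_def B_def C_def using E_sym E_in by auto
    then show "p \<in> prod.swap ` Sigma (L a i) B" using p(1) by force
  next
    fix p assume "p \<in> prod.swap ` Sigma (L a i) B"
    then obtain w x where p: "p = (x, w)" "w \<in> L a i" "x \<in> B w" by auto
    then show "p \<in> Sigma (L a (Suc i)) C" unfolding L_def B_def C_def using E_sym E_in by auto
  qed
  have "card (prod.swap ` Sigma (L a i) B) = card (Sigma (L a i) B)"
    by (rule card_image) (auto simp: inj_on_def)
  then show ?thesis using s1 s2 sw by simp
qed

lemma part_le3: assumes v: "v \<in> V" and w: "w \<in> V" and d: "gdist E v w \<ge> 1"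
  shows "b (gdist E v w) + c (gdist E v w) \<le> 3"
proof -
  let ?B = "{x. E w x \<and> gdist E v x = gdist E v w + 1}"
  let ?C = "{x. E w x \<and> gdist E v x + 1 = gdist E v w}"
  have "card (?B \<union> ?C) = card ?B + card ?C"
    by (rule card_Un_disjoint) (use finS in auto)
  moreover have "card (?B \<union> ?C) \<le> card {x. E w x}"
    by (rule card_mono[OF finN]) auto
  ultimately show ?thesis using Bset[OF v w] Cset[OF v w] cardN[OF w] by simp
qed

lemma c_le3: assumes v: "v \<in> V" and w: "w \<in> V" shows "c (gdist E v w) \<le> 3"
proof -
  have "card {x. E w x \<and> gdist E v x + 1 = gdist E v w} \<le> card {x. E w x}"
    by (rule card_mono[OF finN]) auto
  then show ?thesis using Cset[OF v w] cardN[OF w] by simp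
qed

lemma no_square:
  assumes ab: "a \<noteq> bb" and ex: "E a x" "E bb x" and ey: "E a y" "E bb y"
  shows "x = y"
proof (rule ccontr)
  assume xy: "x \<noteq> y"
  have a: "a \<in> V" and bbV: "bb \<in> V" and xV: "x \<in> V" and yV: "y \<in> V" using E_in ex ey by auto
  have nab: "\<not> E a bb"
  proof
    assume "E a bb"
    then have "T a bb = {}" by (rule triangle_free)
    then show False using ex unfolding T_def by auto
  qed
  have dab: "gdist E a bb = 2" using gd2[OF a bbV] ab nab ex E_sym by blast
  have "{x, y} \<subseteq> {z. E bb z \<and> gdist E a z + 1 = gdist E a bb}"
    using dab gd1 ex ey E_sym E_in by auto
  then have "card {x, y} \<le> card {z. E bb z \<and> gdist E a z + 1 = gdist E a bb}"
    by (rule card_mono[OF finS])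
  then have c2: "c 2 \<ge> 2" using Cset[OF a bbV] dab xy by simp
  have c2le: "c 2 \<le> 3" using c_le3[OF a bbV] dab by simp
  have b2c2: "b 2 + c 2 \<le> 3" using part_le3[OF a bbV] dab by simp
  have b1: "b 1 = 2" using EP[OF ex(1)] triangle_free[OF ex(1)] by simp
  have L0: "L a 0 = {a}" unfolding L_def using gd0 a by auto
  have L1: "L a 1 = {z. E a z}" unfolding L_def using gd1 a E_in by auto
  have cL1: "card (L a 1) = 3" using L1 cardN[OF a] by simp
  have dc1: "card (L a 1) * b 1 = card (L a 2) * c 2" using DC[OF a, of 1] by (simp add: numeral_2_eq_2)
  then have dc1': "card (L a 2) * c 2 = 6" using cL1 b1 by simp
  have dc2: "card (L a 2) * b 2 = card (L a 3) * c 3" using DC[OF a, of 2] by (simp add: numeral_3_eq_3 numeral_2_eq_2)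
  have c3: "c 3 \<ge> 2" if ne: "L a 3 \<noteq> {}"
  proof -
    obtain x3 where x3: "x3 \<in> V" "gdist E a x3 = 3" using ne unfolding L_def by auto
    obtain w where w: "E w x3" "gdist E a w = 2"
      using gd_pred[OF a x3(1)] x3(2) by (auto simp: numeral_3_eq_3 numeral_2_eq_2)
    have wV: "w \<in> V" using E_in w by auto
    obtain y where y: "E y w" "gdist E a y = 1"
      using gd_pred[OF a wV] w(2) by (auto simp: numeral_2_eq_2)
    have yV: "y \<in> V" using E_in y by auto
    have yx: "y \<noteq> x3" using y x3 by auto
    have nyx: "\<not> E y x3"
    proof
      assume "E y x3"
      then have "gdist E a x3 \<le> gdist E a y + 1" using gd_succ a by blast
      then show False using y x3 by simp
    qed
    have dyx: "gdist E y x3 = 2" using gd2[OF yV x3(1)] yx nyx y w by blast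
    have "c 2 = card {z. E x3 z \<and> gdist E y z + 1 = gdist E y x3}"
      using Cset[OF yV x3(1)] dyx by simp
    then have "card {z. E x3 z \<and> gdist E y z + 1 = gdist E y x3} \<ge> 2" using c2 by simp
    then obtain z1 z2 where z: "z1 \<in> {z. E x3 z \<and> gdist E y z + 1 = gdist E y x3}"
      "z2 \<in> {z. E x3 z \<and> gdist E y z + 1 = gdist E y x3}" "z1 \<noteq> z2"
      using two_elems[OF finS[of x3 "\<lambda>z. gdist E y z + 1 = gdist E y x3"]] by blast
    have good: "gdist E a z = 2" if zz: "E x3 z" "gdist E y z + 1 = gdist E y x3" for z
    proof -
      have zV: "z \<in> V" using zz E_in by auto
      have eyz: "E y z" using zz dyx gd1[OF yV zV] by simp
      have "gdist E a z \<le> 2" using gd_succ[OF eyz a] y by simp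
      moreover have "gdist E a z \<noteq> 0"
      proof
        assume "gdist E a z = 0"
        then have "z = a" using gd0[OF a zV] by simp
        then have "E a x3" using zz E_sym by simp
        then show False using gd1[OF a x3(1)] x3 by simp
      qed
      moreover have "gdist E a z \<noteq> 1"
      proof
        assume "gdist E a z = 1"
        then have "E a z" using gd1[OF a zV] by simp
        moreover have "E a y" using gd1[OF a yV] y by simp
        ultimately have "z \<in> T a y" unfolding T_def using eyz E_sym by simp
        then show False using triangle_free[OF \<open>E a y\<close>] by simp
      qed
      ultimately show ?thesis by simp
    qed
    have "{z1, z2} \<subseteq> {z. E x3 z \<and> gdist E a z + 1 = gdist E a x3}"
      using z good x3 by auto
    then have "card {z1, z2} \<le> card {z. E x3 z \<and> gdist E a z + 1 = gdist E a x3}"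
      by (rule card_mono[OF finS])
    then show ?thesis using Cset[OF a x3(1)] x3 z(3) by simp
  qed
  have L3: "card (L a 3) \<le> 1 \<and> (L a 3 \<noteq> {} \<longrightarrow> b 3 = 0)"
  proof (cases "L a 3 = {}")
    case True then show ?thesis by simp
  next
    case False
    have c3': "c 3 \<ge> 2" using c3 False by simp
    obtain x3 where x3: "x3 \<in> L a 3" using False by auto
    then have x3V: "x3 \<in> V" and dx3: "gdist E a x3 = 3" unfolding L_def by auto
    have b3c3: "b 3 + c 3 \<le> 3" using part_le3[OF a x3V] dx3 by simp
    have cL3: "card (L a 3) \<ge> 1" using False finL by (simp add: Suc_le_eq card_gt_0_iff)
    have "c 2 = 2 \<or> c 2 = 3" using c2 c2le by auto
    then show ?thesis
    proof
      assume "c 2 = 3"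
      then have "b 2 = 0" using b2c2 by simp
      then have "card (L a 3) * c 3 = 0" using dc2 by simp
      then show ?thesis using c3' cL3 by simp
    next
      assume cc: "c 2 = 2"
      then have l2: "card (L a 2) = 3" using dc1' by simp
      have "b 2 \<le> 1" using b2c2 cc by simp
      then have "b 2 = 0 \<or> b 2 = 1" by auto
      then show ?thesis
      proof
        assume "b 2 = 0"
        then have "card (L a 3) * c 3 = 0" using dc2 by simp
        then show ?thesis using c3' cL3 by simp
      next
        assume "b 2 = 1"
        then have e3: "card (L a 3) * c 3 = 3" using dc2 l2 by simp
        have "c 3 = 2 \<or> c 3 = 3" using c3' b3c3 by auto
        then show ?thesis
        proof
          assume "c 3 = 2" then show ?thesis using e3 by presburger
        next
          assume "c 3 = 3" then show ?thesis using e3 b3c3 by simp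
        qed
      qed
    qed
  qed
  have cL2: "card (L a 2) \<le> 3"
  proof -
    have "card (L a 2) * 2 \<le> card (L a 2) * c 2" using c2 by simp
    then show ?thesis using dc1' by simp
  qed
  define S where "S = L a 0 \<union> L a 1 \<union> L a 2 \<union> L a 3"
  have S_eq: "S = {w \<in> V. gdist E a w \<le> 3}" unfolding S_def L_def by auto
  have "V \<subseteq> S"
  proof (rule closure[OF _ _ a])
    show "a \<in> S" unfolding S_eq using a gd_self by simp
    show "\<forall>w\<in>S. \<forall>x. E w x \<longrightarrow> x \<in> S"
    proof (intro ballI allI impI)
      fix w x assume w: "w \<in> S" and e: "E w x"
      have wV: "w \<in> V" and xV: "x \<in> V" using E_in e by auto
      have dw: "gdist E a w \<le> 3" using w S_eq by simp
      have dx: "gdist E a x \<le> gdist E a w + 1" using gd_succ[OF e a] .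
      show "x \<in> S"
      proof (cases "gdist E a w = 3")
        case False then show ?thesis using dw dx xV S_eq by simp
      next
        case True
        then have "w \<in> L a 3" unfolding L_def using wV by simp
        then have "b 3 = 0" using L3 by auto
        then have "card {x. E w x \<and> gdist E a x = gdist E a w + 1} = 0"
          using Bset[OF a wV] True by simp
        then have "{x. E w x \<and> gdist E a x = gdist E a w + 1} = {}" using finS by simp
        then have "gdist E a x \<noteq> 4" using e True by auto
        then show ?thesis using dx True xV S_eq by simp
      qed
    qed
  qed
  then have "card V \<le> card S" using finL unfolding S_def by (intro card_mono) simp_all
  also have "\<dots> \<le> card (L a 0) + card (L a 1) + card (L a 2) + card (L a 3)"
  proof -
    have "card S \<le> card (L a 0 \<union> L a 1 \<union> L a 2) + card (L a 3)" unfolding S_def by (rule card_Un_le)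
    also have "card (L a 0 \<union> L a 1 \<union> L a 2) \<le> card (L a 0 \<union> L a 1) + card (L a 2)" by (rule card_Un_le)
    also have "card (L a 0 \<union> L a 1) \<le> card (L a 0) + card (L a 1)" by (rule card_Un_le)
    finally show ?thesis by simp
  qed
  also have "\<dots> \<le> 1 + 3 + 3 + 1" using L0 cL1 cL2 L3 by simp
  finally show False using big by simp
qed

end

lemma z12: "(a::'a::ring_1) * b = 0 \<Longrightarrow> a * b * c * d * e = 0" by simp
lemma z23: "(b::'a::ring_1) * c = 0 \<Longrightarrow> a * b * c * d * e = 0"
  by (metis mult.assoc mult_zero_left mult_zero_right)
lemma z34: "(c::'a::ring_1) * d = 0 \<Longrightarrow> a * b * c * d * e = 0"
  by (metis mult.assoc mult_zero_left mult_zero_right)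
lemma z45: "(d::'a::ring_1) * e = 0 \<Longrightarrow> a * b * c * d * e = 0"
  by (metis mult.assoc mult_zero_right)
lemma z234: "(b::'a::ring_1) * c * d = 0 \<Longrightarrow> a * b * c * d * e = 0"
  by (metis mult.assoc mult_zero_left mult_zero_right)
lemma y12: "(a::'a::ring_1) * b = 0 \<Longrightarrow> a * b * c = 0" by simp
lemma y23: "(b::'a::ring_1) * c = 0 \<Longrightarrow> a * b * c = 0" by (metis mult.assoc mult_zero_right)

lemma sum_single: assumes "finite A" "j \<in> A" "\<forall>p\<in>A. p \<noteq> j \<longrightarrow> f p = 0"
  shows "sum f A = f j"
proof -
  have "sum f A = f j + sum f (A - {j})" using assms(1,2) by (simp add: sum.remove)
  also have "sum f (A - {j}) = 0" using assms(3) by (intro sum.neutral) auto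
  finally show ?thesis by simp
qed

locale qg = cs sc nm st + drg V E b c
  for sc :: "complex \<Rightarrow> 'a::ring_1 \<Rightarrow> 'a" and nm st and V :: "'v set" and E b c +
  fixes u :: "'v \<Rightarrow> 'v \<Rightarrow> 'a"
  assumes Q: "qaut_rel V E st u"
begin

lemma R1: "i \<in> V \<Longrightarrow> j \<in> V \<Longrightarrow> st (u i j) = u i j \<and> u i j * u i j = u i j"
  using Q unfolding qaut_rel_def by metis
lemma rowsum: "i \<in> V \<Longrightarrow> (\<Sum>l\<in>V. u i l) = 1"
  using Q unfolding qaut_rel_def by blast
lemma colsum: "i \<in> V \<Longrightarrow> (\<Sum>l\<in>V. u l i) = 1"
  using Q unfolding qaut_rel_def by blast
lemma R3: "i \<in> V \<Longrightarrow> j \<in> V \<Longrightarrow> k \<in> V \<Longrightarrow> l \<in> V \<Longrightarrow> E i k \<noteq> E j l \<Longrightarrow> u i j * u k l = 0"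
  using Q unfolding qaut_rel_def by blast

lemma row_orth: assumes "i \<in> V" "j \<in> V" "p \<in> V" "j \<noteq> p" shows "u i j * u i p = 0"
  using orth[of V "u i" j p] finV R1 rowsum assms by blast
lemma col_orth: assumes "i \<in> V" "k \<in> V" "j \<in> V" "i \<noteq> k" shows "u i j * u k j = 0"
  using orth[of V "\<lambda>l. u l j" i k] finV R1 colsum assms by blast

lemma ins: assumes "k \<in> V" shows "x * y = (\<Sum>p\<in>V. x * u k p * y)"
proof -
  have "x * y = x * (\<Sum>p\<in>V. u k p) * y" using rowsum[OF assms] by simp
  also have "\<dots> = (\<Sum>p\<in>V. x * u k p * y)" by (simp add: sum_distrib_left sum_distrib_right)
  finally show ?thesis .
qed

lemma ins2: assumes "m \<in> V" shows "x * y * w = (\<Sum>y'\<in>V. \<Sum>z\<in>V. x * u m y' * y * u m z * w)"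
proof -
  have "x * y * w = (\<Sum>y'\<in>V. x * u m y' * y) * w" using ins[OF assms, of x y] by simp
  also have "\<dots> = (\<Sum>y'\<in>V. x * u m y' * y * w)" by (simp add: sum_distrib_right)
  also have "\<dots> = (\<Sum>y'\<in>V. \<Sum>z\<in>V. x * u m y' * y * u m z * w)"
    by (rule sum.cong[OF refl]) (rule ins[OF assms])
  finally show ?thesis .
qed

lemma sum2_single: assumes "n \<in> V" "\<forall>y\<in>V. \<forall>z\<in>V. (y \<noteq> n \<or> z \<noteq> n) \<longrightarrow> F y z = 0"
  shows "(\<Sum>y\<in>V. \<Sum>z\<in>V. F y z) = F n n"
proof -
  have "(\<Sum>y\<in>V. \<Sum>z\<in>V. F y z) = (\<Sum>z\<in>V. F n z)"
    by (rule sum_single[OF finV assms(1), of "\<lambda>y. \<Sum>z\<in>V. F y z"]) (use assms(2) in \<open>auto intro: sum.neutral\<close>)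
  also have "\<dots> = F n n"
  proof (rule sum_single[OF finV assms(1), of "\<lambda>z. F n z"])
    show "\<forall>p\<in>V. p \<noteq> n \<longrightarrow> F n p = 0" using assms(2) assms(1) by blast
  qed
  finally show ?thesis .
qed

lemma key1: assumes ik: "E i k" and jl: "E j l" and lp: "E l p" and pj: "p \<noteq> j"
  shows "u i j * u k l * u i p = 0"
proof -
  have V: "i \<in> V" "k \<in> V" "j \<in> V" "l \<in> V" "p \<in> V" using E_in assms by auto
  have "0 = u i j * u i p" using row_orth V pj by simp
  also have "\<dots> = (\<Sum>x\<in>V. u i j * u k x * u i p)" by (rule ins[OF V(2)])
  also have "\<dots> = u i j * u k l * u i p"
  proof (rule sum_single[OF finV V(4)], intro ballI impI)
    fix x assume x: "x \<in> V" "x \<noteq> l"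
    show "u i j * u k x * u i p = 0"
    proof (cases "E j x \<and> E x p")
      case True
      then have "x = l" using no_square[of j p x l] pj jl lp E_sym by auto
      then show ?thesis using x by simp
    next
      case False
      show ?thesis
      proof (cases "E j x")
        case False then have "u i j * u k x = 0" using R3 V x ik by auto
        then show ?thesis by simp
      next
        case True then have "\<not> E x p" using \<open>\<not> (E j x \<and> E x p)\<close> by blast
        then have "u k x * u i p = 0" using R3 V x ik E_sym by blast
        then show ?thesis by (rule y23)
      qed
    qed
  qed
  finally show ?thesis by simp
qed

lemma selfadj_comm: assumes "x * y = x * y * x" "st x = x" "st y = y"
  shows "x * y = y * x"
proof -
  have "st (x * y * x) = x * y * x" using assms(2,3) by (simp add: st_mult mult.assoc)
  then have "st (x * y) = x * y" using assms(1) by simp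
  then show ?thesis using assms(2,3) by (simp add: st_mult)
qed

lemma comm1: assumes ik: "E i k" and jl: "E j l"
  shows "u i j * u k l = u k l * u i j"
proof -
  have V: "i \<in> V" "k \<in> V" "j \<in> V" "l \<in> V" using E_in assms by auto
  have "u i j * u k l = u i j * u k l * (\<Sum>p\<in>V. u i p)" using rowsum[OF V(1)] by simp
  also have "\<dots> = (\<Sum>p\<in>V. u i j * u k l * u i p)" by (simp add: sum_distrib_left)
  also have "\<dots> = u i j * u k l * u i j"
  proof (rule sum_single[OF finV V(3)], intro ballI impI)
    fix p assume p: "p \<in> V" "p \<noteq> j"
    show "u i j * u k l * u i p = 0"
    proof (cases "E l p")
      case True then show ?thesis using key1 ik jl p by blast
    next
      case False
      then have "u k l * u i p = 0" using R3 V p ik E_sym by blast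
      then show ?thesis by (rule y23)
    qed
  qed
  finally show ?thesis using selfadj_comm R1 V by blast
qed

lemma nbr3: assumes "E n j" "E n l" "E n p" "j \<noteq> l" "l \<noteq> p" "j \<noteq> p" "E n x"
  shows "x = j \<or> x = l \<or> x = p"
proof -
  have nV: "n \<in> V" using E_in assms by auto
  have sub: "{j, l, p} \<subseteq> {y. E n y}" using assms by auto
  have "card {j, l, p} = 3" using assms by simp
  then have "{j, l, p} = {y. E n y}" using card_subset_eq[OF finN sub] cardN[OF nV] by simp
  then show ?thesis using assms(7) by auto
qed

lemma key2: assumes ik: "gdist E i k = 2" and jl: "gdist E j l = 2"
    and V: "i \<in> V" "k \<in> V" "j \<in> V" "l \<in> V" "p \<in> V" and pj: "p \<noteq> j"
  shows "u i j * u k l * u i p = 0"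
proof -
  obtain m where m: "E i m" "E m k" and ik': "i \<noteq> k" using gd2[OF V(1,2)] ik by blast
  obtain n where n: "E j n" "E n l" and jl': "j \<noteq> l" using gd2[OF V(3,4)] jl by blast
  have mV: "m \<in> V" and nV: "n \<in> V" using E_in m n by auto
  show ?thesis
  proof (cases "p = l")
    case True
    then have "u k l * u i p = 0" using col_orth V ik' by simp
    then show ?thesis by (rule y23)
  next
    case pl: False
    define F where "F y z = u i j * u m y * u k l * u m z * u i p" for y z
    have TF: "u i j * u k l * u i p = F n n"
    proof -
      have "u i j * u k l * u i p = (\<Sum>y\<in>V. \<Sum>z\<in>V. F y z)" unfolding F_def by (rule ins2[OF mV])
      also have "\<dots> = F n n"
      proof (rule sum2_single[OF nV], intro ballI impI)
        fix y z assume yz: "y \<in> V" "z \<in> V" "y \<noteq> n \<or> z \<noteq> n"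
        show "F y z = 0"
        proof (cases "E j y \<and> E y l \<and> E l z \<and> E z p")
          case True
          show ?thesis
          proof (cases "y = z")
            case True
            have "y = n" using no_square[of j l y n] jl' \<open>E j y \<and> E y l \<and> E l z \<and> E z p\<close> n E_sym by auto
            then show ?thesis using yz True by simp
          next
            case False
            have "u m y * u k l * u m z = 0"
              using key1[of m k y l z] m \<open>E j y \<and> E y l \<and> E l z \<and> E z p\<close> False by auto
            then show ?thesis unfolding F_def by (rule z234)
          qed
        next
          case False
          then consider "\<not> E j y" | "\<not> E y l" | "\<not> E l z" | "\<not> E z p" by blast
          then show ?thesis
          proof cases
            case 1 then have "u i j * u m y = 0" using R3 V mV yz m by auto
            then show ?thesis unfolding F_def by (rule z12)
          next
            case 2 then have "u m y * u k l = 0" using R3 V mV yz m by auto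
            then show ?thesis unfolding F_def by (rule z23)
          next
            case 3 then have "u k l * u m z = 0" using R3 V mV yz m E_sym by blast
            then show ?thesis unfolding F_def by (rule z34)
          next
            case 4 then have "u m z * u i p = 0" using R3 V mV yz m E_sym by blast
            then show ?thesis unfolding F_def by (rule z45)
          qed
        qed
      qed
      finally show ?thesis .
    qed
    show ?thesis
    proof (cases "E n p")
      case False
      then have "u m n * u i p = 0" using R3 V mV nV m E_sym by blast
      then show ?thesis using TF unfolding F_def by (simp add: z45)
    next
      case np: True
      define H where "H x y z = u i j * u m y * u k x * u m z * u i p" for x y z
      have "0 = u i j * u i p" using row_orth V pj by simp
      also have "\<dots> = (\<Sum>x\<in>V. u i j * u k x * u i p)" by (rule ins[OF V(2)])
      also have "\<dots> = (\<Sum>x\<in>V. H x n n)"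
      proof (rule sum.cong[OF refl])
        fix x assume xV: "x \<in> V"
        have "u i j * u k x * u i p = (\<Sum>y\<in>V. \<Sum>z\<in>V. H x y z)" unfolding H_def by (rule ins2[OF mV])
        also have "\<dots> = H x n n"
        proof (rule sum2_single[OF nV], intro ballI impI)
          fix y z assume yz: "y \<in> V" "z \<in> V" "y \<noteq> n \<or> z \<noteq> n"
          show "H x y z = 0"
          proof (cases "E j y \<and> E y x \<and> E x z \<and> E z p")
            case True
            show ?thesis
            proof (cases "y = z")
              case True
              have "y = n" using no_square[of j p y n] pj \<open>E j y \<and> E y x \<and> E x z \<and> E z p\<close> n np E_sym \<open>y = z\<close> by auto
              then show ?thesis using yz True by simp
            next
              case False
              have "u m y * u k x * u m z = 0"
                using key1[of m k y x z] m \<open>E j y \<and> E y x \<and> E x z \<and> E z p\<close> False by auto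
              then show ?thesis unfolding H_def by (rule z234)
            qed
          next
            case False
            then consider "\<not> E j y" | "\<not> E y x" | "\<not> E x z" | "\<not> E z p" by blast
            then show ?thesis
            proof cases
              case 1 then have "u i j * u m y = 0" using R3 V mV yz m by auto
              then show ?thesis unfolding H_def by (rule z12)
            next
              case 2 then have "u m y * u k x = 0" using R3 V mV yz xV m by auto
              then show ?thesis unfolding H_def by (rule z23)
            next
              case 3 then have "u k x * u m z = 0" using R3 V mV yz xV m E_sym by blast
              then show ?thesis unfolding H_def by (rule z34)
            next
              case 4 then have "u m z * u i p = 0" using R3 V mV yz m E_sym by blast
              then show ?thesis unfolding H_def by (rule z45)
            qed
          qed
        qed
        finally show "u i j * u k x * u i p = H x n n" .
      qed
      also have "\<dots> = H l n n"
      proof (rule sum_single[OF finV V(4)], intro ballI impI)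
        fix x assume xV: "x \<in> V" and xl: "x \<noteq> l"
        show "H x n n = 0"
        proof (cases "E n x")
          case False
          then have "u m n * u k x = 0" using R3 V mV nV xV m by auto
          then show ?thesis unfolding H_def by (rule z23)
        next
          case True
          have "x = j \<or> x = l \<or> x = p"
            by (rule nbr3[OF E_sym[OF n(1)] n(2) np jl' pl[symmetric] pj[symmetric] True])
          then have "x = j \<or> x = p" using xl by simp
          then show ?thesis
          proof
            assume xj: "x = j"
            have "u i j * u m n = u m n * u i j" using comm1 m(1) n(1) by blast
            then have "H x n n = u m n * (u i j * u k j) * u m n * u i p"
              unfolding H_def xj by (simp add: mult.assoc)
            also have "u i j * u k j = 0" using col_orth V ik' by simp
            finally show ?thesis by simp
          next
            assume xp: "x = p"
            have "u m n * u i p = u i p * u m n" using comm1 E_sym[OF m(1)] np by blast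
            then have "H x n n = u i j * u m n * (u k p * u i p) * u m n"
              unfolding H_def xp by (simp add: mult.assoc)
            also have "u k p * u i p = 0" using col_orth V ik' by simp
            finally show ?thesis by simp
          qed
        qed
      qed
      finally have "H l n n = 0" by simp
      then show ?thesis using TF unfolding F_def H_def by simp
    qed
  qed
qed

lemma comm2: assumes ik: "gdist E i k = 2" and jl: "gdist E j l = 2"
    and V: "i \<in> V" "k \<in> V" "j \<in> V" "l \<in> V"
  shows "u i j * u k l = u k l * u i j"
proof -
  have "u i j * u k l = u i j * u k l * (\<Sum>p\<in>V. u i p)" using rowsum[OF V(1)] by simp
  also have "\<dots> = (\<Sum>p\<in>V. u i j * u k l * u i p)" by (simp add: sum_distrib_left)
  also have "\<dots> = u i j * u k l * u i j"
    by (rule sum_single[OF finV V(3)]) (use key2[OF ik jl V] in blast)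
  finally show ?thesis using selfadj_comm R1 V by blast
qed

end

theorem lemma5p3:
  fixes V :: "'v set" and E :: "'v \<Rightarrow> 'v \<Rightarrow> bool"
    and sc :: "complex \<Rightarrow> 'a::ring_1 \<Rightarrow> 'a" and nm :: "'a \<Rightarrow> real" and st :: "'a \<Rightarrow> 'a"
    and u :: "'v \<Rightarrow> 'v \<Rightarrow> 'a"
  assumes "distance_regular V E" and "cubic V E" and "card V \<ge> 10"
    and "cstar_algebra sc nm st"
    and "qaut_rel V E st u"
    and "i \<in> V" "j \<in> V" "k \<in> V" "l \<in> V"
    and "gdist E i k = gdist E j l" and "gdist E i k \<le> 2"
  shows "u i j * u k l = u k l * u i j"
proof -
  obtain b c where DR: "\<forall>v\<in>V. \<forall>w\<in>V.
        card {x. E w x \<and> gdist E v x = gdist E v w + 1} = b (gdist E v w) \<and>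
        card {x. E w x \<and> gdist E v x + 1 = gdist E v w} = c (gdist E v w)"
    and sg: "simple_graph V E" and con: "connected_graph V E"
    using assms(1) unfolding distance_regular_def by blast
  interpret qg sc nm st V E b c u
    by unfold_locales (use assms DR sg con in auto)
  have d: "gdist E i k = 0 \<or> gdist E i k = 1 \<or> gdist E i k = 2" using assms(11) by auto
  then show ?thesis
  proof (elim disjE)
    assume "gdist E i k = 0"
    have "i = k" using gd0[of i k] assms(6-10) \<open>gdist E i k = 0\<close> by simp
    moreover have "j = l" using gd0[of j l] assms(6-10) \<open>gdist E i k = 0\<close> by simp
    ultimately show ?thesis by simp
  next
    assume "gdist E i k = 1"
    then have "E i k" "E j l" using gd1 assms(6-10) by auto
    then show ?thesis by (rule comm1)
  next
    assume "gdist E i k = 2"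
    then show ?thesis using comm2 assms(6-10) by simp
  qed
qed

end
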